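(* Let $K_1,K_2$ be simplicial complexes on $[m]$, $W=K_1\cap K_2$, and let $Z\subset W$ with $\varnothing\notin Z$ and $O_{K_1\cup K_2}(Z)\subset W$, so that the connected sum $K_1\#^ZK_2=\operatorname{Del}_Z(K_1\cup K_2)$ is defined. Let $\mathcal J_Z\subset\mathbb Z[W]$ be the ideal generated by $x_\sigma$, $\sigma\in Z$, and let $\iota_i:\mathcal J_Z\to\mathbb Z[K_i]$ ($i=1,2$) be the module maps obtained by identifying $\mathcal J_Z$ with the ideal $\mathcal I_Z\subset\mathbb Z[K_1\cup K_2]$ generated by $x_\sigma$, $\sigma\in Z$ (via $x_\sigma\mapsto x_\sigma$) followed by the quotient map $\mathbb Z[K_1\cup K_2]\to\mathbb Z[K_i]$. Then there is a natural ring isomorphism $$\mathbb Z[K_1]\,\#_{\mathbb Z[W]}^{\mathcal J_Z}\,\mathbb Z[K_2]\cong\mathbb Z[K_1\#^ZK_2],$$ where the left side is the connected sum of the diagram $\mathcal J_Z\to\mathbb Z[K_i]\to\mathbb Z[W]$ (with the natural quotient maps $\mathbb Z[K_i]\to\mathbb Z[W]$); explicitly, $$\mathbb Z[K_1\#^ZK_2]\cong\frac{\{(a,b)\in\mathbb Z[K_1]\oplus\mathbb Z[K_2]:\mathsf g_1(a)=\mathsf g_2(b)\}}{\{(\iota_1(v),\iota_2(v)):v\in\mathcal J_Z\}}.$$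
   Context: Stanley–Reisner ring: $\mathbb Z[K]=\mathbb Z[x_1,\dots,x_m]/\langle x_\sigma:\sigma\notin K\rangle$, $x_\sigma=\prod_{i\in\sigma}x_i$; for a subcomplex $L\subset K$ there is a natural quotient map $\mathbb Z[K]\to\mathbb Z[L]$, and $\mathsf g_i:\mathbb Z[K_i]\to\mathbb Z[W]$ denote these. Simplicial-complex notation: $O_K(Z)=\{\sigma\in K:\sigma\supseteq\tau$ for some $\tau\in Z\}$, $\operatorname{Del}_Z(K)=K\setminus O_K(Z)$. Connected sum of rings: given ring maps $\epsilon_A:A\to C$, $\epsilon_B:B\to C$, a $C$-module $V$ and module maps $\iota_A:V\to A$, $\iota_B:V\to B$ with $\epsilon_A\iota_A=\epsilon_B\iota_B$, $A\#_C^VB:=(A\times_CB)/\{(\iota_A(v),\iota_B(v)):v\in V\}$ where $A\times_CB=\{(a,b):\epsilon_A(a)=\epsilon_B(b)\}$. *)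

theory Defs
  imports "HOL-Library.Poly_Mapping" "HOL-Algebra.QuotRing"
begin

type_synonym zpoly = "(nat \<Rightarrow>\<^sub>0 nat) \<Rightarrow>\<^sub>0 int"

definition var :: "nat \<Rightarrow> zpoly" where
  "var i = Poly_Mapping.single (Poly_Mapping.single i 1) 1"

definition xs :: "nat set \<Rightarrow> zpoly" where
  "xs \<sigma> = (\<Prod>i\<in>\<sigma>. var i)"

definition Pring :: "nat \<Rightarrow> zpoly ring" where
  "Pring m = \<lparr>carrier = {p. \<forall>\<mu>\<in>Poly_Mapping.keys (p::zpoly). Poly_Mapping.keys (\<mu> :: nat \<Rightarrow>\<^sub>0 nat) \<subseteq> {1..m}},
              mult = (*), one = 1, zero = 0, add = (+)\<rparr>"

definition simplicial_complex :: "nat \<Rightarrow> nat set set \<Rightarrow> bool" where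
  "simplicial_complex m K \<longleftrightarrow> {} \<in> K \<and> (\<forall>\<sigma>\<in>K. \<sigma> \<subseteq> {1..m}) \<and>
     (\<forall>\<sigma>\<in>K. \<forall>\<tau>. \<tau> \<subseteq> \<sigma> \<longrightarrow> \<tau> \<in> K)"

definition Ostar :: "nat set set \<Rightarrow> nat set set \<Rightarrow> nat set set" where
  "Ostar K Z = {\<sigma>\<in>K. \<exists>\<tau>\<in>Z. \<tau> \<subseteq> \<sigma>}"

definition Del :: "nat set set \<Rightarrow> nat set set \<Rightarrow> nat set set" where
  "Del Z K = K - Ostar K Z"

definition SR_ideal :: "nat \<Rightarrow> nat set set \<Rightarrow> zpoly set" where
  "SR_ideal m K = genideal (Pring m) {xs \<sigma> | \<sigma>. \<sigma> \<subseteq> {1..m} \<and> \<sigma> \<notin> K}"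

definition SR :: "nat \<Rightarrow> nat set set \<Rightarrow> zpoly set ring" where
  "SR m K = Pring m Quot SR_ideal m K"

definition SR_proj :: "nat \<Rightarrow> nat set set \<Rightarrow> zpoly \<Rightarrow> zpoly set" where
  "SR_proj m K p = SR_ideal m K +>\<^bsub>Pring m\<^esub> p"

(* natural quotient map Z[K] -> Z[L] for a subcomplex L of K *)
definition SR_map :: "nat \<Rightarrow> nat set set \<Rightarrow> zpoly set \<Rightarrow> zpoly set" where
  "SR_map m L C = SR_proj m L (SOME p. p \<in> C)"

definition fiber_prod ::
  "('a,'c) ring_scheme \<Rightarrow> ('b,'d) ring_scheme \<Rightarrow> ('a \<Rightarrow> 'e) \<Rightarrow> ('b \<Rightarrow> 'e) \<Rightarrow> ('a \<times> 'b) ring" where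
  "fiber_prod A B eA eB =
     \<lparr>carrier = {(a, b). a \<in> carrier A \<and> b \<in> carrier B \<and> eA a = eB b},
      mult = (\<lambda>x y. (fst x \<otimes>\<^bsub>A\<^esub> fst y, snd x \<otimes>\<^bsub>B\<^esub> snd y)),
      one = (\<one>\<^bsub>A\<^esub>, \<one>\<^bsub>B\<^esub>),
      zero = (\<zero>\<^bsub>A\<^esub>, \<zero>\<^bsub>B\<^esub>),
      add = (\<lambda>x y. (fst x \<oplus>\<^bsub>A\<^esub> fst y, snd x \<oplus>\<^bsub>B\<^esub> snd y))\<rparr>"

definition csum_rel :: "'v set \<Rightarrow> ('v \<Rightarrow> 'a) \<Rightarrow> ('v \<Rightarrow> 'b) \<Rightarrow> ('a \<times> 'b) set" where
  "csum_rel V iA iB = {(iA v, iB v) | v. v \<in> V}"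

definition conn_sum ::
  "('a,'c) ring_scheme \<Rightarrow> ('b,'d) ring_scheme \<Rightarrow> ('a \<Rightarrow> 'e) \<Rightarrow> ('b \<Rightarrow> 'e) \<Rightarrow>
   'v set \<Rightarrow> ('v \<Rightarrow> 'a) \<Rightarrow> ('v \<Rightarrow> 'b) \<Rightarrow> ('a \<times> 'b) set ring" where
  "conn_sum A B eA eB V iA iB = fiber_prod A B eA eB Quot csum_rel V iA iB"

definition conn_sum_class ::
  "('a,'c) ring_scheme \<Rightarrow> ('b,'d) ring_scheme \<Rightarrow> ('a \<Rightarrow> 'e) \<Rightarrow> ('b \<Rightarrow> 'e) \<Rightarrow>
   'v set \<Rightarrow> ('v \<Rightarrow> 'a) \<Rightarrow> ('v \<Rightarrow> 'b) \<Rightarrow> 'a \<times> 'b \<Rightarrow> ('a \<times> 'b) set" where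
  "conn_sum_class A B eA eB V iA iB x = csum_rel V iA iB +>\<^bsub>fiber_prod A B eA eB\<^esub> x"

definition SR_genideal :: "nat \<Rightarrow> nat set set \<Rightarrow> nat set set \<Rightarrow> zpoly set set" where
  "SR_genideal m K Z = genideal (SR m K) {SR_proj m K (xs \<sigma>) | \<sigma>. \<sigma> \<in> Z}"

(* iota_i : J_Z -> Z[K_i]: identify v \<in> J_Z \<subseteq> Z[W] with the unique u \<in> I_Z \<subseteq> Z[K1 \<union> K2]
   mapping to v, then project to Z[K_i] *)
definition iota :: "nat \<Rightarrow> nat set set \<Rightarrow> nat set set \<Rightarrow> nat set set \<Rightarrow> nat set set
                    \<Rightarrow> zpoly set \<Rightarrow> zpoly set" where
  "iota m K1 K2 Z Ki v =
     SR_map m Ki (THE u. u \<in> SR_genideal m (K1 \<union> K2) Z \<and> SR_map m (K1 \<inter> K2) u = v)"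

end

theory Submission imports Defs begin


lemma carrier_Pring: "p \<in> carrier (Pring m) \<longleftrightarrow> (\<forall>\<mu>\<in>Poly_Mapping.keys p. Poly_Mapping.keys \<mu> \<subseteq> {1..m})"
  by (simp add: Pring_def)

lemma Pring_simps[simp]: "mult (Pring m) = (*)" "add (Pring m) = (+)" "one (Pring m) = 1" "zero (Pring m) = 0"
  by (simp_all add: Pring_def)

lemma keys_plus_nat: "Poly_Mapping.keys ((a::nat\<Rightarrow>\<^sub>0nat) + b) = Poly_Mapping.keys a \<union> Poly_Mapping.keys b"
  by (auto simp: in_keys_iff lookup_add)

lemma Pring_add_closed: "p \<in> carrier (Pring m) \<Longrightarrow> q \<in> carrier (Pring m) \<Longrightarrow> p + q \<in> carrier (Pring m)"
  unfolding carrier_Pring using keys_add[of p q] by blast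
lemma Pring_minus_closed: "p \<in> carrier (Pring m) \<Longrightarrow> q \<in> carrier (Pring m) \<Longrightarrow> p - q \<in> carrier (Pring m)"
  unfolding carrier_Pring using keys_diff[of p q] by blast
lemma Pring_uminus_closed: "p \<in> carrier (Pring m) \<Longrightarrow> - p \<in> carrier (Pring m)"
  unfolding carrier_Pring by simp
lemma Pring_mult_closed: "p \<in> carrier (Pring m) \<Longrightarrow> q \<in> carrier (Pring m) \<Longrightarrow> p * q \<in> carrier (Pring m)"
proof -
  assume a: "p \<in> carrier (Pring m)" "q \<in> carrier (Pring m)"
  { fix \<mu> assume "\<mu> \<in> Poly_Mapping.keys (p * q)"
    then obtain a b where "\<mu> = a + b" "a \<in> Poly_Mapping.keys p" "b \<in> Poly_Mapping.keys q"
      using keys_mult[of p q] by blast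
    hence "Poly_Mapping.keys \<mu> \<subseteq> {1..m}" using a unfolding carrier_Pring by (simp add: keys_plus_nat) }
  thus ?thesis unfolding carrier_Pring by blast
qed
lemma Pring_zero: "0 \<in> carrier (Pring m)" by (simp add: carrier_Pring)
lemma Pring_one: "1 \<in> carrier (Pring m)" by (simp add: carrier_Pring)

lemma cring_Pring: "cring (Pring m)"
proof (rule cringI)
  show "abelian_group (Pring m)"
    apply (rule abelian_groupI)
         apply (simp add: Pring_add_closed)
        apply (simp add: Pring_zero)
       apply (simp add: add.assoc)
      apply (simp add: add.commute)
     apply simp
    apply (rule_tac x="- x" in bexI)
     apply simp
    apply (simp add: Pring_uminus_closed)
    done
  show "Group.comm_monoid (Pring m)"
    apply (rule comm_monoidI)
        apply (simp add: Pring_mult_closed)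
       apply (simp add: Pring_one)
      apply (simp add: mult.assoc)
     apply simp
    apply (simp add: mult.commute)
    done
qed (simp add: distrib_right)

interpretation PR: cring "Pring m" by (rule cring_Pring)

lemma Pring_a_inv: "p \<in> carrier (Pring m) \<Longrightarrow> \<ominus>\<^bsub>Pring m\<^esub> p = - p"
  by (rule PR.minus_equality) (simp_all add: Pring_uminus_closed)

lemma Pring_a_minus: "p \<in> carrier (Pring m) \<Longrightarrow> q \<in> carrier (Pring m) \<Longrightarrow> p \<ominus>\<^bsub>Pring m\<^esub> q = p - q"
  by (simp add: a_minus_def Pring_a_inv)




section \<open>monomials\<close>

definition ind :: "nat set \<Rightarrow> (nat \<Rightarrow>\<^sub>0 nat)" where
  "ind \<sigma> = (\<Sum>i\<in>\<sigma>. Poly_Mapping.single i 1)"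

lemma lookup_ind: "finite \<sigma> \<Longrightarrow> Poly_Mapping.lookup (ind \<sigma>) i = (if i \<in> \<sigma> then 1 else 0)"
  unfolding ind_def lookup_sum by (simp add: lookup_single when_def)

lemma keys_ind: "finite \<sigma> \<Longrightarrow> Poly_Mapping.keys (ind \<sigma>) = \<sigma>"
  by (auto simp: in_keys_iff lookup_ind split: if_splits)

lemma xs_single: "finite \<sigma> \<Longrightarrow> xs \<sigma> = Poly_Mapping.single (ind \<sigma>) 1"
proof (induction \<sigma> rule: finite_induct)
  case empty
  then show ?case by (simp add: xs_def ind_def)
next
  case (insert i F)
  have "xs (insert i F) = var i * xs F" using insert by (simp add: xs_def)
  also have "\<dots> = Poly_Mapping.single (Poly_Mapping.single i 1 + ind F) 1"
    using insert by (simp add: var_def mult_single)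
  also have "Poly_Mapping.single i 1 + ind F = ind (insert i F)"
    using insert by (simp add: ind_def)
  finally show ?case .
qed

lemma keys_xs: "finite \<sigma> \<Longrightarrow> Poly_Mapping.keys (xs \<sigma>) = {ind \<sigma>}"
  by (simp add: xs_single)

lemma monom_split:
  assumes "finite \<sigma>" "\<sigma> \<subseteq> Poly_Mapping.keys \<mu>"
  shows "Poly_Mapping.single \<mu> (1::int) = Poly_Mapping.single (\<mu> - ind \<sigma>) 1 * xs \<sigma>"
proof -
  have "\<mu> - ind \<sigma> + ind \<sigma> = \<mu>"
  proof (rule poly_mapping_eqI)
    fix i show "Poly_Mapping.lookup (\<mu> - ind \<sigma> + ind \<sigma>) i = Poly_Mapping.lookup \<mu> i"
      using assms by (auto simp: lookup_add lookup_minus lookup_ind in_keys_iff)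
  qed
  thus ?thesis using assms by (simp add: xs_single mult_single)
qed

lemma keys_minus_nat: "Poly_Mapping.keys ((\<mu>::nat\<Rightarrow>\<^sub>0nat) - \<nu>) \<subseteq> Poly_Mapping.keys \<mu>"
  by (auto simp: in_keys_iff lookup_minus)

definition filt :: "((nat \<Rightarrow>\<^sub>0 nat) \<Rightarrow> bool) \<Rightarrow> zpoly \<Rightarrow> zpoly" where
  "filt Q p = Abs_poly_mapping (\<lambda>\<mu>. if Q \<mu> then Poly_Mapping.lookup p \<mu> else 0)"

lemma lookup_filt: "Poly_Mapping.lookup (filt Q p) \<mu> = (if Q \<mu> then Poly_Mapping.lookup p \<mu> else 0)"
proof -
  have fin: "finite {\<mu>. (if Q \<mu> then Poly_Mapping.lookup p \<mu> else 0) \<noteq> 0}"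
    by (rule finite_subset[OF _ finite_keys[of p]]) (auto simp: in_keys_iff split: if_split_asm)
  show ?thesis unfolding filt_def lookup_Abs_poly_mapping[OF fin] ..
qed

lemma keys_filt: "Poly_Mapping.keys (filt Q p) = {\<mu>\<in>Poly_Mapping.keys p. Q \<mu>}"
  by (auto simp: in_keys_iff lookup_filt split: if_split_asm)

lemma filt_carrier: "p \<in> carrier (Pring m) \<Longrightarrow> filt Q p \<in> carrier (Pring m)"
  by (auto simp: carrier_Pring keys_filt)

section \<open>ideals of Pring\<close>

lemma ideal_zero: "ideal I R \<Longrightarrow> \<zero>\<^bsub>R\<^esub> \<in> I"
  by (rule additive_subgroup.zero_closed[OF ideal.axioms(1)])
lemma ideal_add: "ideal I R \<Longrightarrow> a \<in> I \<Longrightarrow> b \<in> I \<Longrightarrow> a \<oplus>\<^bsub>R\<^esub> b \<in> I"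
  by (rule additive_subgroup.a_closed[OF ideal.axioms(1)])
lemma ideal_inv: "ideal I R \<Longrightarrow> a \<in> I \<Longrightarrow> \<ominus>\<^bsub>R\<^esub> a \<in> I"
  by (rule additive_subgroup.a_inv_closed[OF ideal.axioms(1)])
lemma ideal_sub: "ideal I R \<Longrightarrow> I \<subseteq> carrier R"
  by (rule additive_subgroup.a_subset[OF ideal.axioms(1)])

lemma ideal_PringI:
  assumes "I \<subseteq> carrier (Pring m)" "0 \<in> I" "\<And>a b. a \<in> I \<Longrightarrow> b \<in> I \<Longrightarrow> a - b \<in> I"
    "\<And>a x. a \<in> I \<Longrightarrow> x \<in> carrier (Pring m) \<Longrightarrow> x * a \<in> I"
  shows "ideal I (Pring m)"
proof (rule idealI[OF PR.ring_axioms])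
  show "subgroup I (add_monoid (Pring m))"
  proof (rule PR.add.subgroupI)
    show "I \<subseteq> carrier (Pring m)" using assms(1) by simp
    show "I \<noteq> {}" using assms(2) by blast
  next
    fix a assume a: "a \<in> I"
    have "0 - a \<in> I" by (rule assms(3)[OF assms(2) a])
    thus "\<ominus>\<^bsub>Pring m\<^esub> a \<in> I" using Pring_a_inv[of a m] assms(1) a by auto
  next
    fix a b assume a: "a \<in> I" and b: "b \<in> I"
    have "a + b = a - (0 - b)" by simp
    thus "a \<oplus>\<^bsub>Pring m\<^esub> b \<in> I" using assms(2,3) a b by (metis Pring_simps(2))
  qed
next
  fix a x assume "a \<in> I" "x \<in> carrier (Pring m)"
  thus "x \<otimes>\<^bsub>Pring m\<^esub> a \<in> I" "a \<otimes>\<^bsub>Pring m\<^esub> x \<in> I" using assms(4) by (simp_all add: mult.commute)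
qed

definition MI :: "nat \<Rightarrow> nat set set \<Rightarrow> zpoly set" where
  "MI m G = {p \<in> carrier (Pring m). \<forall>\<mu>\<in>Poly_Mapping.keys p. \<exists>\<sigma>\<in>G. \<sigma> \<subseteq> Poly_Mapping.keys \<mu>}"

lemma MI_ideal: "ideal (MI m G) (Pring m)"
proof (rule ideal_PringI)
  show "MI m G \<subseteq> carrier (Pring m)" by (auto simp: MI_def)
  show "0 \<in> MI m G" by (simp add: MI_def Pring_zero)
  fix a b assume "a \<in> MI m G" "b \<in> MI m G"
  thus "a - b \<in> MI m G" using keys_diff[of a b] by (auto simp: MI_def Pring_minus_closed)
next
  fix a x assume a: "a \<in> MI m G" and x: "x \<in> carrier (Pring m)"
  { fix \<mu> assume "\<mu> \<in> Poly_Mapping.keys (x * a)"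
    then obtain c d where "\<mu> = c + d" "c \<in> Poly_Mapping.keys x" "d \<in> Poly_Mapping.keys a"
      using keys_mult[of x a] by blast
    moreover obtain \<sigma> where "\<sigma> \<in> G" "\<sigma> \<subseteq> Poly_Mapping.keys d"
      using a \<open>d \<in> Poly_Mapping.keys a\<close> unfolding MI_def by blast
    ultimately have "\<exists>\<sigma>\<in>G. \<sigma> \<subseteq> Poly_Mapping.keys \<mu>" by (auto simp: keys_plus_nat) }
  thus "x * a \<in> MI m G" using a x by (auto simp: MI_def Pring_mult_closed)
qed

lemma genideal_xs:
  assumes G: "G \<subseteq> Pow {1..m}"
  shows "genideal (Pring m) (xs ` G) = MI m G"
proof
  have fin: "finite \<sigma>" if "\<sigma> \<in> G" for \<sigma>
  proof -
    have "\<sigma> \<subseteq> {1..m}" using G that by blast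
    thus "finite \<sigma>" by (rule finite_subset) simp
  qed
  have "xs ` G \<subseteq> MI m G"
  proof
    fix x assume "x \<in> xs ` G"
    then obtain \<sigma> where s: "\<sigma> \<in> G" "x = xs \<sigma>" by blast
    thus "x \<in> MI m G" using fin[OF s(1)] G by (auto simp: MI_def carrier_Pring keys_xs keys_ind)
  qed
  thus "genideal (Pring m) (xs ` G) \<subseteq> MI m G"
    by (rule PR.genideal_minimal[OF MI_ideal])
  have sub: "xs ` G \<subseteq> carrier (Pring m)" using \<open>xs ` G \<subseteq> MI m G\<close> by (auto simp: MI_def)
  interpret J: ideal "genideal (Pring m) (xs ` G)" "Pring m" by (rule PR.genideal_ideal[OF sub])
  show "MI m G \<subseteq> genideal (Pring m) (xs ` G)"
  proof
    fix p assume p: "p \<in> MI m G"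
    have "Poly_Mapping.keys p \<subseteq> {\<mu>. Poly_Mapping.keys \<mu> \<subseteq> {1..m} \<and> (\<exists>\<sigma>\<in>G. \<sigma> \<subseteq> Poly_Mapping.keys \<mu>)}"
      using p by (auto simp: MI_def carrier_Pring)
    thus "p \<in> genideal (Pring m) (xs ` G)"
    proof (induction p rule: frag_induction)
      case zero
      then show ?case using ideal_zero[OF J.is_ideal] by simp
    next
      case (one \<mu>)
      then obtain \<sigma> where s: "\<sigma> \<in> G" "\<sigma> \<subseteq> Poly_Mapping.keys \<mu>" "Poly_Mapping.keys \<mu> \<subseteq> {1..m}" by blast
      have "Poly_Mapping.single \<mu> (1::int) = Poly_Mapping.single (\<mu> - ind \<sigma>) 1 * xs \<sigma>"
        by (rule monom_split[OF fin[OF s(1)] s(2)])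
      moreover have "Poly_Mapping.single (\<mu> - ind \<sigma>) (1::int) \<in> carrier (Pring m)"
        using s(3) keys_minus_nat[of \<mu> "ind \<sigma>"] by (auto simp: carrier_Pring)
      moreover have "xs \<sigma> \<in> genideal (Pring m) (xs ` G)"
        using PR.genideal_self[OF sub] s(1) by blast
      ultimately show ?case using J.I_l_closed by fastforce
    next
      case (diff a b)
      hence ab: "a \<in> genideal (Pring m) (xs ` G)" "b \<in> genideal (Pring m) (xs ` G)" by simp_all
      have "a \<oplus>\<^bsub>Pring m\<^esub> \<ominus>\<^bsub>Pring m\<^esub> b \<in> genideal (Pring m) (xs ` G)"
        by (rule ideal_add[OF J.is_ideal ab(1) ideal_inv[OF J.is_ideal ab(2)]])
      thus ?case using Pring_a_minus[of a m b] ideal_sub[OF J.is_ideal] ab by (auto simp: a_minus_def)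
    qed
  qed
qed

definition NK :: "nat \<Rightarrow> nat set set \<Rightarrow> zpoly set" where
  "NK m K = {p \<in> carrier (Pring m). \<forall>\<mu>\<in>Poly_Mapping.keys p. Poly_Mapping.keys \<mu> \<notin> K}"

definition dc :: "nat set set \<Rightarrow> bool" where
  "dc K \<longleftrightarrow> (\<forall>\<sigma>\<in>K. \<forall>\<tau>. \<tau> \<subseteq> \<sigma> \<longrightarrow> \<tau> \<in> K)"

lemma SR_ideal_eq:
  assumes "dc K"
  shows "SR_ideal m K = NK m K"
proof -
  have "{xs \<sigma> | \<sigma>. \<sigma> \<subseteq> {1..m} \<and> \<sigma> \<notin> K} = xs ` {\<sigma>. \<sigma> \<subseteq> {1..m} \<and> \<sigma> \<notin> K}" by blast
  hence "SR_ideal m K = MI m {\<sigma>. \<sigma> \<subseteq> {1..m} \<and> \<sigma> \<notin> K}"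
    unfolding SR_ideal_def using genideal_xs[of "{\<sigma>. \<sigma> \<subseteq> {1..m} \<and> \<sigma> \<notin> K}" m] by auto
  also have "\<dots> = NK m K"
    using assms unfolding MI_def NK_def dc_def carrier_Pring by blast
  finally show ?thesis .
qed

lemma xs_carrier: "\<sigma> \<subseteq> {1..m} \<Longrightarrow> xs \<sigma> \<in> carrier (Pring m)"
  using finite_subset[of \<sigma> "{1..m}"] by (auto simp: carrier_Pring keys_xs keys_ind)

lemma NK_ideal: "dc K \<Longrightarrow> ideal (NK m K) (Pring m)"
  unfolding SR_ideal_eq[symmetric] SR_ideal_def
  by (rule PR.genideal_ideal) (blast intro: xs_carrier)




lemma dc_simplicial: "simplicial_complex m K \<Longrightarrow> dc K"
  by (auto simp: simplicial_complex_def dc_def)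

lemma carrier_Quot: "carrier (R Quot I) = (\<lambda>a. I +>\<^bsub>R\<^esub> a) ` carrier R"
  by (auto simp: FactRing_def A_RCOSETS_def')

lemma SR_cring: "dc K \<Longrightarrow> cring (SR m K)"
  by (simp add: SR_def SR_ideal_eq ideal.quotient_is_cring NK_ideal cring_Pring)

lemma SR_ring: "dc K \<Longrightarrow> ring (SR m K)"
  using SR_cring cring.axioms(1) by blast

lemma SR_proj_def2: "SR_proj m K = (\<lambda>p. SR_ideal m K +>\<^bsub>Pring m\<^esub> p)"
  by (simp add: SR_proj_def fun_eq_iff)

lemma SR_proj_hom: "dc K \<Longrightarrow> SR_proj m K \<in> ring_hom (Pring m) (SR m K)"
  using ideal.rcos_ring_hom[OF NK_ideal, of K m]
  by (simp add: SR_def SR_proj_def2 SR_ideal_eq)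

lemma SR_carrier: "dc K \<Longrightarrow> carrier (SR m K) = SR_proj m K ` carrier (Pring m)"
  by (simp add: SR_def carrier_Quot SR_proj_def2)

lemma SR_proj_zero: "dc K \<Longrightarrow> SR_proj m K 0 = \<zero>\<^bsub>SR m K\<^esub>"
  using ring_hom_zero[OF SR_proj_hom PR.ring_axioms SR_ring, of K m]
  by simp

lemma SR_proj_eq:
  assumes "dc K" "p \<in> carrier (Pring m)" "q \<in> carrier (Pring m)"
  shows "SR_proj m K p = SR_proj m K q \<longleftrightarrow> p - q \<in> NK m K"
proof -
  interpret I: ideal "NK m K" "Pring m" by (rule NK_ideal[OF assms(1)])
  have e: "\<And>x. SR_proj m K x = NK m K +>\<^bsub>Pring m\<^esub> x" by (simp add: SR_proj_def SR_ideal_eq assms(1))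
  have mm: "(p \<in> NK m K +>\<^bsub>Pring m\<^esub> q) = (p - q \<in> NK m K)"
    using I.a_rcos_module_minus[OF PR.ring_axioms assms(3) assms(2)] Pring_a_minus[OF assms(2,3)] by simp
  show ?thesis
  proof
    assume "SR_proj m K p = SR_proj m K q"
    hence "p \<in> NK m K +>\<^bsub>Pring m\<^esub> q" using I.a_rcos_self[OF assms(2)] e by simp
    thus "p - q \<in> NK m K" using mm by simp
  next
    assume "p - q \<in> NK m K"
    hence "p \<in> NK m K +>\<^bsub>Pring m\<^esub> q" using mm by simp
    thus "SR_proj m K p = SR_proj m K q" using I.a_repr_independence'[OF _ assms(3)] e by simp
  qed
qed

lemma NK_mono: "L \<subseteq> K \<Longrightarrow> NK m K \<subseteq> NK m L"
  by (auto simp: NK_def)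

lemma SR_map_proj:
  assumes "dc K" "dc L" "L \<subseteq> K" "p \<in> carrier (Pring m)"
  shows "SR_map m L (SR_proj m K p) = SR_proj m L p"
proof -
  interpret I: ideal "NK m K" "Pring m" by (rule NK_ideal[OF assms(1)])
  have e: "\<And>x. SR_proj m K x = NK m K +>\<^bsub>Pring m\<^esub> x" by (simp add: SR_proj_def SR_ideal_eq assms(1))
  let ?q = "SOME q. q \<in> SR_proj m K p"
  have "p \<in> SR_proj m K p" using I.a_rcos_self[OF assms(4)] e by simp
  hence q: "?q \<in> SR_proj m K p" by (rule someI)
  hence qc: "?q \<in> carrier (Pring m)" using I.a_elemrcos_carrier[OF assms(4)] e by simp
  have "?q - p \<in> NK m K"
    using q I.a_rcos_module_minus[OF PR.ring_axioms assms(4) qc] Pring_a_minus[OF qc assms(4)] e by simp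
  hence "?q - p \<in> NK m L" using NK_mono[OF assms(3)] by blast
  hence "SR_proj m L ?q = SR_proj m L p" using SR_proj_eq[OF assms(2) qc assms(4)] by simp
  thus ?thesis by (simp add: SR_map_def)
qed

lemma img_ideal:
  assumes "ring R" "ring S" "h \<in> ring_hom R S" "h ` carrier R = carrier S" "ideal I R"
  shows "ideal (h ` I) S"
proof -
  interpret S: ring S by fact
  interpret I: ideal I R by fact
  interpret H: ring_hom_ring R S h by (rule ring_hom_ringI2[OF assms(1-3)])
  show ?thesis
  proof (rule idealI[OF assms(2)])
    show "subgroup (h ` I) (add_monoid S)"
    proof (rule S.add.subgroupI)
      show "h ` I \<subseteq> carrier S" using ideal_sub[OF assms(5)] by auto
      show "h ` I \<noteq> {}" using ideal_zero[OF assms(5)] by blast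
    next
      fix a assume "a \<in> h ` I"
      then obtain x where x: "x \<in> I" "a = h x" by blast
      have xc: "x \<in> carrier R" using x ideal_sub[OF assms(5)] by blast
      have "\<ominus>\<^bsub>S\<^esub> a = h (\<ominus>\<^bsub>R\<^esub> x)" using H.hom_a_inv[OF xc] x by simp
      thus "\<ominus>\<^bsub>S\<^esub> a \<in> h ` I" using ideal_inv[OF assms(5) x(1)] by simp
    next
      fix a b assume "a \<in> h ` I" "b \<in> h ` I"
      then obtain x y where xy: "x \<in> I" "a = h x" "y \<in> I" "b = h y" by blast
      hence "a \<oplus>\<^bsub>S\<^esub> b = h (x \<oplus>\<^bsub>R\<^esub> y)" using ideal_sub[OF assms(5)] H.hom_add by auto
      thus "a \<oplus>\<^bsub>S\<^esub> b \<in> h ` I" using ideal_add[OF assms(5) xy(1) xy(3)] by (metis image_eqI)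
    qed
  next
    fix a x assume "a \<in> h ` I" "x \<in> carrier S"
    then obtain a' x' where ax: "a' \<in> I" "a = h a'" "x' \<in> carrier R" "x = h x'" using assms(4) by blast
    have a'c: "a' \<in> carrier R" using ax ideal_sub[OF assms(5)] by blast
    have "x \<otimes>\<^bsub>S\<^esub> a = h (x' \<otimes>\<^bsub>R\<^esub> a')" using ax a'c H.hom_mult by simp
    thus "x \<otimes>\<^bsub>S\<^esub> a \<in> h ` I" using I.I_l_closed[OF ax(1) ax(3)] by simp
    have "a \<otimes>\<^bsub>S\<^esub> x = h (a' \<otimes>\<^bsub>R\<^esub> x')" using ax a'c H.hom_mult by simp
    thus "a \<otimes>\<^bsub>S\<^esub> x \<in> h ` I" using I.I_r_closed[OF ax(1) ax(3)] by simp
  qed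
qed

lemma SR_genideal_eq:
  assumes dK: "dc K" and Zp: "Z \<subseteq> Pow {1..m}"
  shows "SR_genideal m K Z = SR_proj m K ` MI m Z"
proof
  interpret S: cring "SR m K" by (rule SR_cring[OF dK])
  have hom: "SR_proj m K \<in> ring_hom (Pring m) (SR m K)" by (rule SR_proj_hom[OF dK])
  have gens: "{SR_proj m K (xs \<sigma>) | \<sigma>. \<sigma> \<in> Z} = SR_proj m K ` xs ` Z" by blast
  have MIeq: "MI m Z = genideal (Pring m) (xs ` Z)" using genideal_xs[OF Zp] by simp
  have xsc: "xs ` Z \<subseteq> carrier (Pring m)" using Zp xs_carrier by blast
  have xsMI: "xs ` Z \<subseteq> MI m Z" using PR.genideal_self[OF xsc] MIeq by simp
  have imgI: "ideal (SR_proj m K ` MI m Z) (SR m K)"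
    by (rule img_ideal[OF PR.ring_axioms S.ring_axioms hom SR_carrier[OF dK, symmetric] MI_ideal])
  show "SR_genideal m K Z \<subseteq> SR_proj m K ` MI m Z"
    unfolding SR_genideal_def gens by (rule S.genideal_minimal[OF imgI]) (use xsMI in blast)
  have gc: "SR_proj m K ` xs ` Z \<subseteq> carrier (SR m K)" using xsc ring_hom_closed[OF hom] by blast
  let ?J = "genideal (SR m K) (SR_proj m K ` xs ` Z)"
  have J: "ideal ?J (SR m K)" by (rule S.genideal_ideal[OF gc])
  have V: "ideal {r \<in> carrier (Pring m). SR_proj m K r \<in> ?J} (Pring m)"
    by (rule ring_hom_ring.ideal_vimage[OF ring_hom_ringI2[OF PR.ring_axioms S.ring_axioms hom] J])
  have "xs ` Z \<subseteq> {r \<in> carrier (Pring m). SR_proj m K r \<in> ?J}"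
    using xsc S.genideal_self[OF gc] by blast
  hence "MI m Z \<subseteq> {r \<in> carrier (Pring m). SR_proj m K r \<in> ?J}"
    unfolding MIeq by (rule PR.genideal_minimal[OF V])
  thus "SR_proj m K ` MI m Z \<subseteq> SR_genideal m K Z"
    unfolding SR_genideal_def gens by blast
qed




lemma rec_id: "(R::'a ring)\<lparr>carrier := carrier R, zero := zero R\<rparr> = R"
  by (cases R) simp

locale csetup =
  fixes m :: nat and K1 K2 Z :: "nat set set"
  assumes dc1: "dc K1" and dc2: "dc K2" and ZW: "Z \<subseteq> K1 \<inter> K2"
    and Zp: "Z \<subseteq> Pow {1..m}" and OW: "Ostar (K1 \<union> K2) Z \<subseteq> K1 \<inter> K2"
begin

abbreviation "W \<equiv> K1 \<inter> K2"
abbreviation "KK \<equiv> K1 \<union> K2"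
abbreviation "DD \<equiv> Del Z (K1 \<union> K2)"
abbreviation "Th \<equiv> (\<lambda>p. (SR_proj m K1 p, SR_proj m K2 p))"
abbreviation "FF \<equiv> fiber_prod (SR m K1) (SR m K2) (SR_map m W) (SR_map m W)"
abbreviation "RR \<equiv> csum_rel (SR_genideal m W Z) (iota m K1 K2 Z K1) (iota m K1 K2 Z K2)"

lemma dcW: "dc W" using dc1 dc2 by (auto simp: dc_def)
lemma dcK: "dc KK" using dc1 dc2 by (auto simp: dc_def)
lemma dcD: "dc DD"
proof (unfold dc_def, intro ballI allI impI)
  fix \<sigma> \<tau> assume s: "\<sigma> \<in> DD" "\<tau> \<subseteq> \<sigma>"
  have a: "\<sigma> \<in> KK" and b: "\<not>(\<exists>t\<in>Z. t \<subseteq> \<sigma>)" using s(1) by (auto simp: Del_def Ostar_def)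
  have "\<tau> \<in> KK" using dcK a s(2) unfolding dc_def by blast
  moreover have "\<not>(\<exists>t\<in>Z. t \<subseteq> \<tau>)" using b s(2) by blast
  ultimately show "\<tau> \<in> DD" by (auto simp: Del_def Ostar_def)
qed

lemma key_inj:
  assumes p: "p \<in> MI m Z" and q: "q \<in> MI m Z" and e: "SR_proj m W p = SR_proj m W q"
  shows "SR_proj m KK p = SR_proj m KK q"
proof -
  have pc: "p \<in> carrier (Pring m)" and qc: "q \<in> carrier (Pring m)" using p q by (auto simp: MI_def)
  have w: "p - q \<in> NK m W" using SR_proj_eq[OF dcW pc qc] e by simp
  have "p - q \<in> NK m KK"
    unfolding NK_def
  proof (intro CollectI conjI ballI)
    show "p - q \<in> carrier (Pring m)" using w by (simp add: NK_def)
    fix \<mu> assume mu: "\<mu> \<in> Poly_Mapping.keys (p - q)"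
    hence nW: "Poly_Mapping.keys \<mu> \<notin> W" using w by (auto simp: NK_def)
    have "\<mu> \<in> Poly_Mapping.keys p \<or> \<mu> \<in> Poly_Mapping.keys q" using mu keys_diff[of p q] by blast
    then obtain \<tau> where "\<tau> \<in> Z" "\<tau> \<subseteq> Poly_Mapping.keys \<mu>" using p q by (auto simp: MI_def)
    thus "Poly_Mapping.keys \<mu> \<notin> KK" using nW OW by (auto simp: Ostar_def)
  qed
  thus ?thesis using SR_proj_eq[OF dcK pc qc] by simp
qed

lemma iota_eq:
  assumes p: "p \<in> MI m Z" and Ki: "Ki \<subseteq> KK" "dc Ki"
  shows "iota m K1 K2 Z Ki (SR_proj m W p) = SR_proj m Ki p"
proof -
  have G: "SR_genideal m KK Z = SR_proj m KK ` MI m Z" by (rule SR_genideal_eq[OF dcK Zp])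
  have pc: "p \<in> carrier (Pring m)" using p by (auto simp: MI_def)
  have "(THE u. u \<in> SR_genideal m KK Z \<and> SR_map m W u = SR_proj m W p) = SR_proj m KK p"
  proof (rule the_equality)
    show "SR_proj m KK p \<in> SR_genideal m KK Z \<and> SR_map m W (SR_proj m KK p) = SR_proj m W p"
      using G p SR_map_proj[OF dcK dcW _ pc] by auto
  next
    fix u assume u: "u \<in> SR_genideal m KK Z \<and> SR_map m W u = SR_proj m W p"
    then obtain q where q: "q \<in> MI m Z" "u = SR_proj m KK q" using G by auto
    have qc: "q \<in> carrier (Pring m)" using q by (auto simp: MI_def)
    have "SR_proj m W q = SR_proj m W p" using u q SR_map_proj[OF dcK dcW _ qc] by auto
    thus "u = SR_proj m KK p" using key_inj[OF q(1) p] q by simp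
  qed
  thus ?thesis unfolding iota_def using SR_map_proj[OF dcK Ki(2) Ki(1) pc] by simp
qed

lemma Th_closed: "p \<in> carrier (Pring m) \<Longrightarrow> Th p \<in> carrier FF"
  using ring_hom_closed[OF SR_proj_hom[OF dc1]] ring_hom_closed[OF SR_proj_hom[OF dc2]]
    SR_map_proj[OF dc1 dcW _ , of p] SR_map_proj[OF dc2 dcW _ , of p]
  by (simp add: fiber_prod_def)

lemma Th_hom: "Th \<in> ring_hom (Pring m) FF"
proof (rule ring_hom_memI)
  fix x y assume x: "x \<in> carrier (Pring m)" and y: "y \<in> carrier (Pring m)"
  show "Th x \<in> carrier FF" by (rule Th_closed[OF x])
  show "Th (x \<otimes>\<^bsub>Pring m\<^esub> y) = Th x \<otimes>\<^bsub>FF\<^esub> Th y"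
    using ring_hom_mult[OF SR_proj_hom[OF dc1] x y] ring_hom_mult[OF SR_proj_hom[OF dc2] x y]
    by (simp add: fiber_prod_def)
  show "Th (x \<oplus>\<^bsub>Pring m\<^esub> y) = Th x \<oplus>\<^bsub>FF\<^esub> Th y"
    using ring_hom_add[OF SR_proj_hom[OF dc1] x y] ring_hom_add[OF SR_proj_hom[OF dc2] x y]
    by (simp add: fiber_prod_def)
next
  show "Th \<one>\<^bsub>Pring m\<^esub> = \<one>\<^bsub>FF\<^esub>"
    using ring_hom_one[OF SR_proj_hom[OF dc1]] ring_hom_one[OF SR_proj_hom[OF dc2]]
    by (simp add: fiber_prod_def)
qed

lemma Th_surj: "Th ` carrier (Pring m) = carrier FF"
proof
  show "Th ` carrier (Pring m) \<subseteq> carrier FF" using Th_closed by blast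
  show "carrier FF \<subseteq> Th ` carrier (Pring m)"
  proof
    fix x assume "x \<in> carrier FF"
    then obtain A B where x: "x = (A, B)" "A \<in> carrier (SR m K1)" "B \<in> carrier (SR m K2)"
      "SR_map m W A = SR_map m W B" by (auto simp: fiber_prod_def)
    obtain a where a: "a \<in> carrier (Pring m)" "A = SR_proj m K1 a" using x(2) SR_carrier[OF dc1] by auto
    obtain b where b: "b \<in> carrier (Pring m)" "B = SR_proj m K2 b" using x(3) SR_carrier[OF dc2] by auto
    have "SR_proj m W a = SR_proj m W b"
      using x(4) a b SR_map_proj[OF dc1 dcW _ a(1)] SR_map_proj[OF dc2 dcW _ b(1)] by auto
    hence ab: "a - b \<in> NK m W" using SR_proj_eq[OF dcW a(1) b(1)] by simp
    define r where "r = filt (\<lambda>\<mu>. Poly_Mapping.keys \<mu> \<notin> K1) (b - a)"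
    define p where "p = a + r"
    have rc: "r \<in> carrier (Pring m)" unfolding r_def by (rule filt_carrier[OF Pring_minus_closed[OF b(1) a(1)]])
    have pc: "p \<in> carrier (Pring m)" unfolding p_def by (rule Pring_add_closed[OF a(1) rc])
    have "p - a \<in> NK m K1"
      using rc by (auto simp: p_def r_def NK_def keys_filt)
    hence 1: "SR_proj m K1 p = A" using SR_proj_eq[OF dc1 pc a(1)] a by simp
    have pb: "p - b = filt (\<lambda>\<mu>. Poly_Mapping.keys \<mu> \<in> K1) (a - b)"
      by (rule poly_mapping_eqI) (simp add: p_def r_def lookup_filt lookup_add lookup_minus)
    have "p - b \<in> NK m K2"
      unfolding NK_def
    proof (intro CollectI conjI ballI)
      show "p - b \<in> carrier (Pring m)" by (rule Pring_minus_closed[OF pc b(1)])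
      fix \<mu> assume "\<mu> \<in> Poly_Mapping.keys (p - b)"
      hence "\<mu> \<in> Poly_Mapping.keys (a - b)" "Poly_Mapping.keys \<mu> \<in> K1" unfolding pb keys_filt by auto
      thus "Poly_Mapping.keys \<mu> \<notin> K2" using ab by (auto simp: NK_def)
    qed
    hence 2: "SR_proj m K2 p = B" using SR_proj_eq[OF dc2 pc b(1)] b by simp
    show "x \<in> Th ` carrier (Pring m)" using 1 2 pc x(1) by blast
  qed
qed

lemma FF_ring: "ring FF"
proof -
  have r: "ring (FF\<lparr>carrier := Th ` carrier (Pring m), zero := Th \<zero>\<^bsub>Pring m\<^esub>\<rparr>)"
    by (rule PR.ring_hom_imp_img_ring[OF Th_hom])
  have z: "Th \<zero>\<^bsub>Pring m\<^esub> = \<zero>\<^bsub>FF\<^esub>"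
    using SR_proj_zero[OF dc1] SR_proj_zero[OF dc2] by (simp add: fiber_prod_def)
  have "FF\<lparr>carrier := Th ` carrier (Pring m), zero := Th \<zero>\<^bsub>Pring m\<^esub>\<rparr> = FF"
    unfolding Th_surj z by (rule rec_id)
  thus ?thesis using r by simp
qed

lemma RR_eq: "RR = Th ` MI m Z"
proof -
  have G: "SR_genideal m W Z = SR_proj m W ` MI m Z" by (rule SR_genideal_eq[OF dcW Zp])
  have i1: "\<And>p. p \<in> MI m Z \<Longrightarrow> iota m K1 K2 Z K1 (SR_proj m W p) = SR_proj m K1 p"
    by (rule iota_eq) (auto simp: dc1)
  have i2: "\<And>p. p \<in> MI m Z \<Longrightarrow> iota m K1 K2 Z K2 (SR_proj m W p) = SR_proj m K2 p"
    by (rule iota_eq) (auto simp: dc2)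
  show ?thesis
  proof
    show "RR \<subseteq> Th ` MI m Z"
    proof
      fix x assume "x \<in> RR"
      then obtain v where v: "v \<in> SR_genideal m W Z" "x = (iota m K1 K2 Z K1 v, iota m K1 K2 Z K2 v)"
        unfolding csum_rel_def by blast
      then obtain p where p: "p \<in> MI m Z" "v = SR_proj m W p" using G by blast
      have "x = Th p" using v(2) p i1[OF p(1)] i2[OF p(1)] by simp
      thus "x \<in> Th ` MI m Z" using p(1) by blast
    qed
    show "Th ` MI m Z \<subseteq> RR"
    proof
      fix x assume "x \<in> Th ` MI m Z"
      then obtain p where p: "p \<in> MI m Z" "x = Th p" by blast
      have "SR_proj m W p \<in> SR_genideal m W Z" using G p(1) by blast
      moreover have "x = (iota m K1 K2 Z K1 (SR_proj m W p), iota m K1 K2 Z K2 (SR_proj m W p))"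
        using p i1[OF p(1)] i2[OF p(1)] by simp
      ultimately show "x \<in> RR" unfolding csum_rel_def by blast
    qed
  qed
qed

lemma RR_ideal: "ideal RR FF"
  unfolding RR_eq by (rule img_ideal[OF PR.ring_axioms FF_ring Th_hom Th_surj MI_ideal])

lemma Th_in_RR:
  assumes pc: "p \<in> carrier (Pring m)"
  shows "Th p \<in> RR \<longleftrightarrow> p \<in> NK m DD"
proof
  assume "Th p \<in> RR"
  then obtain q where q: "q \<in> MI m Z" "Th p = Th q" unfolding RR_eq by auto
  have qc: "q \<in> carrier (Pring m)" using q by (auto simp: MI_def)
  have n1: "p - q \<in> NK m K1" using q SR_proj_eq[OF dc1 pc qc] by simp
  have n2: "p - q \<in> NK m K2" using q SR_proj_eq[OF dc2 pc qc] by simp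
  show "p \<in> NK m DD"
    unfolding NK_def
  proof (intro CollectI conjI ballI pc)
    fix \<mu> assume mu: "\<mu> \<in> Poly_Mapping.keys p"
    show "Poly_Mapping.keys \<mu> \<notin> DD"
    proof (cases "\<mu> \<in> Poly_Mapping.keys q")
      case True
      then obtain \<tau> where "\<tau> \<in> Z" "\<tau> \<subseteq> Poly_Mapping.keys \<mu>" using q by (auto simp: MI_def)
      thus ?thesis by (auto simp: Del_def Ostar_def)
    next
      case False
      hence "\<mu> \<in> Poly_Mapping.keys (p - q)" using mu by (auto simp: in_keys_iff lookup_minus)
      hence "Poly_Mapping.keys \<mu> \<notin> KK" using n1 n2 by (auto simp: NK_def)
      thus ?thesis by (auto simp: Del_def)
    qed
  qed
next
  assume pD: "p \<in> NK m DD"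
  define q where "q = filt (\<lambda>\<mu>. \<exists>\<tau>\<in>Z. \<tau> \<subseteq> Poly_Mapping.keys \<mu>) p"
  have qc: "q \<in> carrier (Pring m)" unfolding q_def by (rule filt_carrier[OF pc])
  have qM: "q \<in> MI m Z" using qc by (auto simp: MI_def q_def keys_filt)
  have pq: "p - q = filt (\<lambda>\<mu>. \<not> (\<exists>\<tau>\<in>Z. \<tau> \<subseteq> Poly_Mapping.keys \<mu>)) p"
    by (rule poly_mapping_eqI) (simp add: q_def lookup_filt lookup_minus)
  have "p - q \<in> NK m KK"
    unfolding NK_def
  proof (intro CollectI conjI ballI)
    show "p - q \<in> carrier (Pring m)" by (rule Pring_minus_closed[OF pc qc])
    fix \<mu> assume "\<mu> \<in> Poly_Mapping.keys (p - q)"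
    hence "\<mu> \<in> Poly_Mapping.keys p" "\<not> (\<exists>\<tau>\<in>Z. \<tau> \<subseteq> Poly_Mapping.keys \<mu>)" unfolding pq keys_filt by auto
    thus "Poly_Mapping.keys \<mu> \<notin> KK" using pD by (auto simp: NK_def Del_def Ostar_def)
  qed
  hence "p - q \<in> NK m K1" "p - q \<in> NK m K2" using NK_mono[of K1 KK m] NK_mono[of K2 KK m] by auto
  hence "Th p = Th q" using SR_proj_eq[OF dc1 pc qc] SR_proj_eq[OF dc2 pc qc] by simp
  thus "Th p \<in> RR" unfolding RR_eq using qM by blast
qed

abbreviation "hh \<equiv> (\<lambda>p. RR +>\<^bsub>FF\<^esub> Th p)"

lemma CC_ring: "ring (FF Quot RR)"
  by (rule ideal.quotient_is_ring[OF RR_ideal])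

lemma hh_hom: "hh \<in> ring_hom (Pring m) (FF Quot RR)"
  using ring_hom_trans[OF Th_hom ideal.rcos_ring_hom[OF RR_ideal]] by (simp add: comp_def)

lemma hh_surj: "hh ` carrier (Pring m) = carrier (FF Quot RR)"
  unfolding carrier_Quot Th_surj[symmetric] by (simp add: image_comp comp_def)

lemma hh_kernel: "a_kernel (Pring m) (FF Quot RR) hh = SR_ideal m DD"
proof -
  interpret RI: ideal RR FF by (rule RR_ideal)
  have "hh p = RR \<longleftrightarrow> p \<in> NK m DD" if pc: "p \<in> carrier (Pring m)" for p
  proof -
    have tc: "Th p \<in> carrier FF" by (rule Th_closed[OF pc])
    have "hh p = RR \<longleftrightarrow> Th p \<in> RR"
    proof
      assume "hh p = RR" thus "Th p \<in> RR" using RI.a_rcos_self[OF tc] by simp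
    next
      assume "Th p \<in> RR" thus "hh p = RR" by (rule RI.a_rcos_const)
    qed
    thus ?thesis using Th_in_RR[OF pc] by simp
  qed
  thus ?thesis unfolding a_kernel_def' SR_ideal_eq[OF dcD]
    by (auto simp: FactRing_def NK_def)
qed

lemma main:
  "\<exists>\<phi>. \<phi> \<in> ring_iso (FF Quot RR) (SR m DD) \<and> (\<forall>p\<in>carrier (Pring m). \<phi> (hh p) = SR_proj m DD p)"
proof -
  interpret H: ring_hom_ring "Pring m" "FF Quot RR" hh
    by (rule ring_hom_ringI2[OF PR.ring_axioms CC_ring hh_hom])
  have iso0: "(\<lambda>X. the_elem (hh ` X)) \<in> ring_iso (Pring m Quot a_kernel (Pring m) (FF Quot RR) hh) (FF Quot RR)"
    by (rule H.FactRing_iso_set[OF hh_surj])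
  have iso: "(\<lambda>X. the_elem (hh ` X)) \<in> ring_iso (SR m DD) (FF Quot RR)"
    using iso0 unfolding hh_kernel SR_def[symmetric] .
  define \<phi> where "\<phi> = inv_into (carrier (SR m DD)) (\<lambda>X. the_elem (hh ` X))"
  have iso2: "\<phi> \<in> ring_iso (FF Quot RR) (SR m DD)"
    unfolding \<phi>_def by (rule ring_iso_set_sym[OF SR_ring[OF dcD] iso])
  have inj: "inj_on (\<lambda>X. the_elem (hh ` X)) (carrier (SR m DD))"
    using iso unfolding ring_iso_def bij_betw_def by blast
  have "\<phi> (hh p) = SR_proj m DD p" if pc: "p \<in> carrier (Pring m)" for p
  proof -
    have e: "SR_proj m DD p = a_kernel (Pring m) (FF Quot RR) hh +>\<^bsub>Pring m\<^esub> p"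
      unfolding hh_kernel by (rule SR_proj_def)
    have "(\<lambda>X. the_elem (hh ` X)) (SR_proj m DD p) = hh p"
      unfolding e by (rule H.the_elem_simp[OF pc])
    moreover have c: "SR_proj m DD p \<in> carrier (SR m DD)"
      using SR_carrier[OF dcD] pc by blast
    have "\<phi> ((\<lambda>X. the_elem (hh ` X)) (SR_proj m DD p)) = SR_proj m DD p"
      unfolding \<phi>_def by (rule inv_into_f_f[OF inj c])
    ultimately show ?thesis by simp
  qed
  thus ?thesis using iso2 by blast
qed

end

theorem theorem4p4:
  fixes m :: nat and K1 K2 Z :: "nat set set"
  assumes "simplicial_complex m K1" and "simplicial_complex m K2"
    and "Z \<subseteq> K1 \<inter> K2" and "{} \<notin> Z"
    and "Ostar (K1 \<union> K2) Z \<subseteq> K1 \<inter> K2"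
  shows "\<exists>\<phi>. \<phi> \<in> ring_iso
            (conn_sum (SR m K1) (SR m K2) (SR_map m (K1 \<inter> K2)) (SR_map m (K1 \<inter> K2))
               (SR_genideal m (K1 \<inter> K2) Z) (iota m K1 K2 Z K1) (iota m K1 K2 Z K2))
            (SR m (Del Z (K1 \<union> K2)))
          \<and> (\<forall>p\<in>carrier (Pring m).
               \<phi> (conn_sum_class (SR m K1) (SR m K2) (SR_map m (K1 \<inter> K2)) (SR_map m (K1 \<inter> K2))
                    (SR_genideal m (K1 \<inter> K2) Z) (iota m K1 K2 Z K1) (iota m K1 K2 Z K2)
                    (SR_proj m K1 p, SR_proj m K2 p))
               = SR_proj m (Del Z (K1 \<union> K2)) p)"
proof -
  have Zp: "Z \<subseteq> Pow {1..m}" using assms(1,3) by (auto simp: simplicial_complex_def)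
  interpret csetup m K1 K2 Z
    using assms Zp by unfold_locales (auto simp: dc_simplicial)
  show ?thesis using main unfolding conn_sum_def conn_sum_class_def .
qed


end
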